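(* Let $\mu^\ast$ be an upper quasi-density on $\mathbb{H}$, let $A\subseteq B\subseteq\mathbb{H}$ with $\mu^\ast(A)<\mu^\ast(B)$, and let $a,b\in\mathbb{R}$ with $\mu^\ast(A)\le a<b\le\mu^\ast(B)$. Then for every integer $k>(b-a)^{-1}$ there exist $\mathcal{H}_0\subseteq\{0,1,\dots,k-1\}$ and $h_0\in\{0,1,\dots,k-1\}$ such that $$a<\mu^\ast\big(A\cup(B\cap\mathcal{V}_{k,\mathcal{H}_0})\big)<b\le\mu^\ast\big(A\cup(B\cap\mathcal{V}_{k,\mathcal{H}_0\cup\{h_0\}})\big),$$ where $\mathcal{V}_{k,\mathcal{H}}:=\bigcup_{h\in\mathcal{H}}(k\cdot\mathbb{H}+h)$.
   Context: $\mathbb{N}=\{0,1,2,\dots\}$, $\mathbb{N}^+=\{1,2,\dots\}$; $\mathbb{H}$ is one of $\mathbb{Z},\mathbb{N},\mathbb{N}^+$. For $X\subseteq\mathbb{H}$, $k\in\mathbb{N}^+$, $h\in\mathbb{N}$, $k\cdot X+h:=\{kx+h:x\in X\}$. An upper quasi-density on $\mathbb{H}$ is a function $\mu^\ast:\mathcal{P}(\mathbb{H})\to\mathbb{R}$ with $\mu^\ast(\mathbb{H})=1$, $\mu^\ast(X)\le1$ for all $X$, $\mu^\ast(X\cup Y)\le\mu^\ast(X)+\mu^\ast(Y)$ for all $X,Y$, and $\mu^\ast(k\cdot X+h)=\frac1k\mu^\ast(X)$ for all $X\subseteq\mathbb{H}$, $h,k\in\mathbb{N}^+$. *)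

theory Defs
  imports Complex_Main
begin

text \<open>The ground set H is one of Z, N = {0,1,...}, N+ = {1,2,...}, modelled as a set of integers.\<close>
definition is_host :: "int set \<Rightarrow> bool" where
  "is_host H \<longleftrightarrow> H = UNIV \<or> H = {0..} \<or> H = {1..}"

definition dil :: "int \<Rightarrow> int \<Rightarrow> int set \<Rightarrow> int set" where
  "dil k h X = (\<lambda>x. k * x + h) ` X"

definition Vset :: "int set \<Rightarrow> int \<Rightarrow> int set \<Rightarrow> int set" where
  "Vset H k HH = (\<Union>h\<in>HH. dil k h H)"

text \<open>Upper quasi-density on H (a function on subsets of H; values outside P(H) are irrelevant).\<close>
definition upper_quasi_density :: "int set \<Rightarrow> (int set \<Rightarrow> real) \<Rightarrow> bool" where
  "upper_quasi_density H \<mu> \<longleftrightarrow>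
     \<mu> H = 1 \<and>
     (\<forall>X. X \<subseteq> H \<longrightarrow> \<mu> X \<le> 1) \<and>
     (\<forall>X Y. X \<subseteq> H \<longrightarrow> Y \<subseteq> H \<longrightarrow> \<mu> (X \<union> Y) \<le> \<mu> X + \<mu> Y) \<and>
     (\<forall>X h k. X \<subseteq> H \<longrightarrow> h \<ge> 1 \<longrightarrow> k \<ge> 1 \<longrightarrow> \<mu> (dil k h X) = \<mu> X / real_of_int k)"

end

theory Submission
  imports Defs
begin

lemma uqd_nonneg:
  assumes "upper_quasi_density H \<mu>" "X \<subseteq> H"
  shows "\<mu> X \<ge> 0"
proof -
  have "\<mu> (X \<union> X) \<le> \<mu> X + \<mu> X" using assms unfolding upper_quasi_density_def by blast
  thus ?thesis by simp
qed

lemma host_cases: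
  assumes "is_host H"
  obtains "H = UNIV" | m where "H = {m..}" "m \<ge> 0"
proof -
  have "H = UNIV \<or> H = {0..} \<or> H = {1..}" using assms unfolding is_host_def .
  thus thesis
  proof (elim disjE)
    assume "H = UNIV" thus thesis by (rule that(1))
  next
    assume "H = {0..}" thus thesis using that(2)[of 0] by simp
  next
    assume "H = {1..}" thus thesis using that(2)[of 1] by simp
  qed
qed

lemma host_one: "is_host H \<Longrightarrow> x \<ge> 1 \<Longrightarrow> x \<in> H"
  unfolding is_host_def by auto

lemma host_suc: "is_host H \<Longrightarrow> x \<in> H \<Longrightarrow> x + 1 \<in> H"
  unfolding is_host_def by auto

lemma uqd_single:
  assumes hH: "is_host H" and u: "upper_quasi_density H \<mu>" and x: "x \<in> H"
  shows "\<mu> {x} = 0"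
proof -
  have dil: "\<And>X h k. X \<subseteq> H \<Longrightarrow> h \<ge> 1 \<Longrightarrow> k \<ge> 1 \<Longrightarrow> \<mu> (dil k h X) = \<mu> X / real_of_int k"
    using u unfolding upper_quasi_density_def by blast
  have step: "\<mu> {i+1} = \<mu> {i}" if "i \<in> H" for i
  proof -
    have "dil 1 1 {i} = {i+1}" unfolding dil_def by simp
    thus ?thesis using dil[of "{i}" 1 1] that by simp
  qed
  have P: "i \<in> H \<longrightarrow> \<mu> {i} = \<mu> {1}" for i
  proof (induction i rule: int_induct[where k=1])
    case base then show ?case by simp
  next
    case (step1 i) then show ?case using step[of i] host_one[OF hH, of i] by simp
  next
    case (step2 i) then show ?case using step[of "i-1"] host_suc[OF hH, of "i-1"] by auto
  qed
  have "dil 2 1 {1} = {3}" unfolding dil_def by simp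
  hence "\<mu> {3} = \<mu> {1} / 2" using dil[of "{1}" 1 2] host_one[OF hH, of 1] by simp
  moreover have "\<mu> {3} = \<mu> {1}" using P[of 3] host_one[OF hH, of 3] by simp
  ultimately have "\<mu> {1} = 0" by simp
  thus ?thesis using P[of x] x by simp
qed

lemma uqd_empty:
  assumes u: "upper_quasi_density H \<mu>"
  shows "\<mu> {} = 0"
proof -
  have "dil 2 1 {} = {}" unfolding dil_def by simp
  moreover have "\<mu> (dil 2 1 {}) = \<mu> {} / real_of_int 2"
    using u unfolding upper_quasi_density_def by (meson empty_subsetI order_refl one_le_numeral)
  ultimately have "\<mu> {} = \<mu> {} / 2" by simp
  thus ?thesis by simp
qed

lemma uqd_finite:
  assumes hH: "is_host H" and u: "upper_quasi_density H \<mu>"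
  shows "finite F \<Longrightarrow> F \<subseteq> H \<Longrightarrow> \<mu> F \<le> 0"
proof (induction F rule: finite_induct)
  case empty then show ?case using uqd_empty[OF u] by simp
next
  case (insert x F)
  have sub: "\<And>X Y. X \<subseteq> H \<Longrightarrow> Y \<subseteq> H \<Longrightarrow> \<mu> (X \<union> Y) \<le> \<mu> X + \<mu> Y"
    using u unfolding upper_quasi_density_def by blast
  have xH: "x \<in> H" and FH: "F \<subseteq> H" using insert.prems by auto
  have "\<mu> ({x} \<union> F) \<le> \<mu> {x} + \<mu> F" using xH FH by (intro sub) auto
  moreover have "\<mu> F \<le> 0" using insert.IH FH .
  moreover have "\<mu> {x} = 0" using uqd_single[OF hH u xH] .
  ultimately show ?case by simp
qed

lemma dil_mem: "x \<in> X \<Longrightarrow> s = k*x+h \<Longrightarrow> s \<in> dil k h X"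
  unfolding dil_def by (rule image_eqI[where f="\<lambda>x. k*x+h"])

lemma dil_memE:
  assumes "s \<in> dil k h X"
  obtains x where "x \<in> X" "s = k*x+h"
  using assms unfolding dil_def by (rule imageE) (rule that)

lemma piece:
  assumes hH: "is_host H" and u: "upper_quasi_density H \<mu>"
    and S: "S \<subseteq> H" "S \<subseteq> dil k h H" and k: "k \<ge> 1" and h: "h \<ge> 0"
  shows "\<exists>T X'. S = T \<union> dil k (h+k) X' \<and> X' \<subseteq> H \<and> T \<subseteq> H \<and> \<mu> T = 0"
proof -
  define X where "X = {x \<in> H. k*x+h \<in> S}"
  have SX: "S = dil k h X"
  proof
    show "S \<subseteq> dil k h X"
    proof
      fix s assume s: "s \<in> S"
      have "s \<in> dil k h H" using S(2) s by (rule subsetD)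
      then obtain x where x: "x \<in> H" "s = k*x+h" by (rule dil_memE)
      have "x \<in> X" unfolding X_def using x s by simp
      thus "s \<in> dil k h X" using x(2) by (rule dil_mem)
    qed
    show "dil k h X \<subseteq> S"
    proof
      fix s assume "s \<in> dil k h X"
      then obtain x where x: "x \<in> X" "s = k*x+h" by (rule dil_memE)
      thus "s \<in> S" unfolding X_def by simp
    qed
  qed
  from hH show ?thesis
  proof (cases rule: host_cases)
    case 1
    have "dil k h X = dil k (h+k) ((\<lambda>x. x-1) ` X)"
    proof
      show "dil k h X \<subseteq> dil k (h+k) ((\<lambda>x. x-1) ` X)"
      proof
        fix s assume "s \<in> dil k h X"
        then obtain x where x: "x \<in> X" "s = k*x+h" by (rule dil_memE)
        have "s = k*(x-1)+(h+k)" using x(2) by (simp add: algebra_simps)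
        moreover have "x - 1 \<in> (\<lambda>x. x-1) ` X" using x(1) by (rule imageI)
        ultimately show "s \<in> dil k (h+k) ((\<lambda>x. x-1) ` X)" by (intro dil_mem)
      qed
      show "dil k (h+k) ((\<lambda>x. x-1) ` X) \<subseteq> dil k h X"
      proof
        fix s assume "s \<in> dil k (h+k) ((\<lambda>x. x-1) ` X)"
        then obtain y where y: "y \<in> (\<lambda>x. x-1) ` X" "s = k*y+(h+k)" by (rule dil_memE)
        then obtain x where x: "x \<in> X" "y = x - 1" by blast
        have "s = k*x+h" unfolding y(2) x(2) by (simp add: algebra_simps)
        with x(1) show "s \<in> dil k h X" by (rule dil_mem)
      qed
    qed
    hence e1: "S = {} \<union> dil k (h+k) ((\<lambda>x. x-1) ` X)" using SX by (simp only: Un_empty_left)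
    have e2: "(\<lambda>x. x-1) ` X \<subseteq> H" unfolding 1 by (rule subset_UNIV)
    have e3: "{} \<subseteq> H" by (rule empty_subsetI)
    have "S = {} \<union> dil k (h+k) ((\<lambda>x. x-1) ` X) \<and> (\<lambda>x. x-1) ` X \<subseteq> H \<and> {} \<subseteq> H \<and> \<mu> {} = 0"
      using e1 e2 e3 uqd_empty[OF u] by (intro conjI)
    thus ?thesis by (intro exI[of _ "{}"] exI[of _ "(\<lambda>x. x-1) ` X"])
  next
    case (2 m)
    define T where "T = S \<inter> {k*m+h}"
    define X' where "X' = (\<lambda>x. x-1) ` (X - {m})"
    have X'H: "X' \<subseteq> H"
    proof
      fix y assume "y \<in> X'"
      then obtain x where "x \<in> X" "x \<noteq> m" "y = x - 1" unfolding X'_def by blast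
      moreover have "x \<ge> m" using \<open>x \<in> X\<close> unfolding X_def 2 by simp
      ultimately show "y \<in> H" unfolding 2 by simp
    qed
    have "S = T \<union> dil k (h+k) X'"
    proof
      show "S \<subseteq> T \<union> dil k (h+k) X'"
      proof
        fix s assume "s \<in> S"
        hence "s \<in> dil k h X" using SX by simp
        then obtain x where x: "x \<in> X" "s = k*x+h" by (rule dil_memE)
        show "s \<in> T \<union> dil k (h+k) X'"
        proof (cases "x = m")
          case True thus ?thesis using x \<open>s\<in>S\<close> unfolding T_def by simp
        next
          case False
          hence "x - 1 \<in> X'" unfolding X'_def using x(1) by simp
          moreover have "s = k*(x-1) + (h+k)" using x by (simp add: algebra_simps)
          ultimately have "s \<in> dil k (h+k) X'" by (rule dil_mem)
          thus ?thesis by (rule UnI2)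
        qed
      qed
      show "T \<union> dil k (h+k) X' \<subseteq> S"
      proof
        fix s assume "s \<in> T \<union> dil k (h+k) X'"
        then show "s \<in> S"
        proof
          assume "s \<in> T" thus ?thesis unfolding T_def by (rule IntD1)
        next
          assume "s \<in> dil k (h+k) X'"
          then obtain y where y: "y \<in> X'" "s = k*y+(h+k)" by (rule dil_memE)
          then obtain x where x: "x \<in> X" "y = x - 1" unfolding X'_def by blast
          have "s = k*x+h" unfolding y(2) x(2) by (simp add: algebra_simps)
          thus ?thesis using x(1) unfolding X_def by simp
        qed
      qed
    qed
    moreover have "\<mu> T = 0"
    proof (cases "k*m+h \<in> S")
      case True
      hence "T = {k*m+h}" unfolding T_def by auto
      moreover have "k*m+h \<in> H" using True S(1) by (rule subsetD[rotated])
      ultimately show ?thesis using uqd_single[OF hH u, of "k*m+h"] by simp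
    next
      case False
      hence "T = {}" unfolding T_def by auto
      thus ?thesis using uqd_empty[OF u] by simp
    qed
    moreover have "T \<subseteq> H" using S(1) unfolding T_def by blast
    ultimately have "S = T \<union> dil k (h+k) X' \<and> X' \<subseteq> H \<and> T \<subseteq> H \<and> \<mu> T = 0" using X'H by simp
    thus ?thesis by (intro exI[of _ T] exI[of _ X'])
  qed
qed

lemma add_piece:
  assumes hH: "is_host H" and u: "upper_quasi_density H \<mu>"
    and Y: "Y \<subseteq> H" and B: "B \<subseteq> H" and k: "k \<ge> 1" and h: "h \<ge> 0"
  shows "\<mu> (Y \<union> (B \<inter> dil k h H)) \<le> \<mu> Y + 1 / real_of_int k"
proof -
  obtain T X' where TX: "B \<inter> dil k h H = T \<union> dil k (h+k) X'" "X' \<subseteq> H" "T \<subseteq> H" "\<mu> T = 0"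
    using piece[OF hH u, of "B \<inter> dil k h H" k h] B k h by blast
  have sub: "\<And>X Y. X \<subseteq> H \<Longrightarrow> Y \<subseteq> H \<Longrightarrow> \<mu> (X \<union> Y) \<le> \<mu> X + \<mu> Y"
    and dil: "\<And>X h k. X \<subseteq> H \<Longrightarrow> h \<ge> 1 \<Longrightarrow> k \<ge> 1 \<Longrightarrow> \<mu> (dil k h X) = \<mu> X / real_of_int k"
    and le1: "\<And>X. X \<subseteq> H \<Longrightarrow> \<mu> X \<le> 1"
    using u unfolding upper_quasi_density_def by blast+
  have DH: "dil k (h+k) X' \<subseteq> H"
    using TX(1) B by blast
  have "Y \<union> (B \<inter> dil k h H) = (Y \<union> T) \<union> dil k (h+k) X'" using TX(1) by auto
  hence "\<mu> (Y \<union> (B \<inter> dil k h H)) \<le> \<mu> (Y \<union> T) + \<mu> (dil k (h+k) X')"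
    using sub[of "Y \<union> T" "dil k (h+k) X'"] Y TX(3) DH by simp
  also have "\<mu> (Y \<union> T) \<le> \<mu> Y + \<mu> T" using sub Y TX(3) by blast
  also have "\<mu> (dil k (h+k) X') = \<mu> X' / real_of_int k" using dil TX(2) k h by simp
  also have "\<dots> \<le> 1 / real_of_int k" using le1[OF TX(2)] k by (simp add: divide_right_mono)
  finally show ?thesis using TX(4) by simp
qed

theorem mainTheorem8:
  fixes H :: "int set" and \<mu> :: "int set \<Rightarrow> real" and A B :: "int set" and a b :: real
  assumes "is_host H" and "upper_quasi_density H \<mu>"
    and "A \<subseteq> B" and "B \<subseteq> H" and "\<mu> A < \<mu> B"
    and "\<mu> A \<le> a" and "a < b" and "b \<le> \<mu> B"
  shows "\<forall>k::int. real_of_int k > 1 / (b - a) \<longrightarrow>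
    (\<exists>H0 \<subseteq> {0..<k}. \<exists>h0 \<in> {0..<k}.
       a < \<mu> (A \<union> (B \<inter> Vset H k H0)) \<and>
       \<mu> (A \<union> (B \<inter> Vset H k H0)) < b \<and>
       b \<le> \<mu> (A \<union> (B \<inter> Vset H k (insert h0 H0))))"
proof (intro allI impI)
  fix k :: int
  assume kk: "real_of_int k > 1 / (b - a)"
  have ba: "b - a > 0" using assms by simp
  have kpos: "real_of_int k > 0" using kk ba by (smt (verit) divide_pos_pos)
  hence k1: "k \<ge> 1" by simp
  have kba: "1 / real_of_int k < b - a" using kk ba kpos
    by (metis divide_less_eq mult.commute)
  define g where "g n = \<mu> (A \<union> (B \<inter> Vset H k {0..<int n}))" for n :: nat
  have Vsuc: "Vset H k {0..<int (Suc n)} = Vset H k {0..<int n} \<union> dil k (int n) H" for n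
  proof -
    have "{0..<int (Suc n)} = insert (int n) {0..<int n}" by auto
    thus ?thesis unfolding Vset_def by auto
  qed
  have gstep: "g (Suc n) \<le> g n + 1 / real_of_int k" for n
  proof -
    have "A \<union> (B \<inter> Vset H k {0..<int (Suc n)}) = (A \<union> (B \<inter> Vset H k {0..<int n})) \<union> (B \<inter> dil k (int n) H)"
      unfolding Vsuc by auto
    thus ?thesis unfolding g_def
      using add_piece[OF assms(1,2), of "A \<union> (B \<inter> Vset H k {0..<int n})" B k "int n"] assms(3,4) k1
      by auto
  qed
  have g0: "g 0 = \<mu> A" unfolding g_def Vset_def by simp
  define F where "F = B - Vset H k {0..<k}"
  have Fsub: "F \<subseteq> {0..k}"
  proof
    fix x assume "x \<in> F"
    hence xH: "x \<in> H" and xn: "x \<notin> Vset H k {0..<k}" using assms(4) unfolding F_def by auto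
    have "x = k * (x div k) + x mod k" by simp
    moreover have "x mod k \<in> {0..<k}" using k1 by simp
    ultimately have "x div k \<notin> H" using xn unfolding Vset_def dil_def by (metis UN_I imageI)
    have "H \<noteq> UNIV" using \<open>x div k \<notin> H\<close> by auto
    hence "H = {0..} \<or> H = {1..}" using assms(1) unfolding is_host_def by auto
    thus "x \<in> {0..k}"
    proof
      assume H0: "H = {0..}"
      hence "x \<ge> 0" using xH by auto
      hence "x div k \<ge> 0" using k1 by (simp add: pos_imp_zdiv_nonneg_iff)
      thus ?thesis using H0 \<open>x div k \<notin> H\<close> by auto
    next
      assume H1: "H = {1..}"
      hence "x \<ge> 1" using xH by auto
      moreover have "x < k"
      proof (rule ccontr)
        assume "\<not> x < k"
        hence "x div k \<ge> 1" using zdiv_mono1[of k x k] k1 by simp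
        thus False using H1 \<open>x div k \<notin> H\<close> by auto
      qed
      ultimately show ?thesis by auto
    qed
  qed
  have Ffin: "finite F" using Fsub finite_subset by blast
  have gk: "g (nat k) \<ge> \<mu> B"
  proof -
    define Y where "Y = A \<union> (B \<inter> Vset H k {0..<k})"
    have FH: "F \<subseteq> H" unfolding F_def using assms(4) by blast
    have YH: "Y \<subseteq> H" unfolding Y_def using assms(3,4) by blast
    have "B = Y \<union> F" unfolding F_def Y_def using assms(3) by blast
    moreover have "\<mu> (Y \<union> F) \<le> \<mu> Y + \<mu> F"
      using assms(2) FH YH unfolding upper_quasi_density_def by blast
    moreover have "\<mu> F \<le> 0" using uqd_finite[OF assms(1,2) Ffin FH] .
    moreover have "g (nat k) = \<mu> Y" unfolding g_def Y_def using k1 by simp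
    ultimately show ?thesis by simp
  qed
  define n0 where "n0 = (LEAST n. b \<le> g n)"
  have ex: "b \<le> g (nat k)" using gk assms by simp
  have n0b: "b \<le> g n0" unfolding n0_def using ex by (rule LeastI)
  have n0le: "n0 \<le> nat k" unfolding n0_def using ex by (rule Least_le)
  have "n0 \<noteq> 0"
  proof
    assume "n0 = 0" thus False using n0b g0 assms(6,7) by simp
  qed
  then obtain m where m: "n0 = Suc m" by (cases n0) auto
  have gm: "g m < b" using not_less_Least[of m "\<lambda>n. b \<le> g n"] m unfolding n0_def by auto
  have "g m > a" using gstep[of m] m n0b kba by simp
  moreover have "insert (int m) {0..<int m} = {0..<int (Suc m)}" by auto
  moreover have "int m \<in> {0..<k}" using n0le m by auto
  moreover have "{0..<int m} \<subseteq> {0..<k}" using n0le m by auto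
  show "\<exists>H0 \<subseteq> {0..<k}. \<exists>h0 \<in> {0..<k}.
       a < \<mu> (A \<union> (B \<inter> Vset H k H0)) \<and>
       \<mu> (A \<union> (B \<inter> Vset H k H0)) < b \<and>
       b \<le> \<mu> (A \<union> (B \<inter> Vset H k (insert h0 H0)))"
  proof (intro exI bexI conjI)
    show "{0..<int m} \<subseteq> {0..<k}" by fact
    show "int m \<in> {0..<k}" by fact
    show "a < \<mu> (A \<union> (B \<inter> Vset H k {0..<int m}))" using \<open>g m > a\<close> unfolding g_def .
    show "\<mu> (A \<union> (B \<inter> Vset H k {0..<int m})) < b" using gm unfolding g_def .
    show "b \<le> \<mu> (A \<union> (B \<inter> Vset H k (insert (int m) {0..<int m})))"
      using n0b unfolding m g_def \<open>insert (int m) {0..<int m} = {0..<int (Suc m)}\<close> .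
  qed
qed

end
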